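(* Let $\mathbf p=(p_1,\dots,p_n)$ be positive integers with $p_1\ge\cdots\ge p_n$, let $c\in[0,1]$, let $g=\gcd(p_1,\dots,p_n)$, and let $P=(p_1+\cdots+p_n)/g$. For each pair $i<j$, let $T_{ij}$ be the finite word consisting of the first $(p_i+p_j)/g$ terms of the two-party sequence $S_c((p_i,p_j))$, with party labels $1,2$ replaced by $i,j$ respectively. Run the following lifting procedure for $P$ steps. At each step, find a label $k\in\{1,\dots,n\}$ that is the first remaining entry of all $n-1$ words $T_{ij}$ with $k\in\{i,j\}$. Append $k$ to an output word $w$, and delete the first entry of each of those $n-1$ words. Then: (i) at every step such a label $k$ exists and is unique; (ii) after $P$ steps all the words $T_{ij}$ are empty; (iii) the output word $w=(w_1,\dots,w_P)$ equals the first $P$ terms of $S_c(\mathbf p)$.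
   Context: Stationary divisor method with cut point $c\in[0,1]$ for a vote vector $\mathbf q=(q_1,\dots,q_m)$ with $q_1\ge\cdots\ge q_m$: seats are allocated one at a time. Initially each party $i$ has $a_i=0$ seats; each next seat goes to a party $i$ maximizing $q_i/(a_i+c)$, whose $a_i$ then increases by $1$. Ties are broken in favor of the smallest index. For $c=0$ the convention is that $q_i/0>q_j/0$ whenever $q_i>q_j$, and $q_i/0>q_j/k$ for every $k>0$. $S_c(\mathbf q)$ is the infinite sequence of indices of parties receiving successive seats. *)

theory Defs
  imports Complex_Main
begin

text \<open>Parties are indexed 0,...,length q - 1 (0-based). Seat state a :: nat => nat.\<close>

text \<open>prio_ge q c a i j: the priority q_i/(a_i+c) of party i is at least that of party j,
  with the convention for division by zero (only possible when c = 0 and a_i = 0):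
  q_i/0 vs q_j/0 compared by q, and q_i/0 beats q_j/k for every k > 0.\<close>
definition prio_ge :: "nat list \<Rightarrow> real \<Rightarrow> (nat \<Rightarrow> nat) \<Rightarrow> nat \<Rightarrow> nat \<Rightarrow> bool" where
  "prio_ge q c a i j =
    (let x = real (a i) + c; y = real (a j) + c in
     if x = 0 \<and> y = 0 then q ! i \<ge> q ! j
     else if x = 0 then True
     else if y = 0 then False
     else real (q ! i) / x \<ge> real (q ! j) / y)"

definition winner :: "nat list \<Rightarrow> real \<Rightarrow> (nat \<Rightarrow> nat) \<Rightarrow> nat" where
  "winner q c a = (LEAST i. i < length q \<and> (\<forall>j < length q. prio_ge q c a i j))"

primrec seats :: "nat list \<Rightarrow> real \<Rightarrow> nat \<Rightarrow> (nat \<Rightarrow> nat)" where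
  "seats q c 0 = (\<lambda>_. 0)"
| "seats q c (Suc t) = (let a = seats q c t; k = winner q c a in a(k := a k + 1))"

text \<open>S_c(q): the t-th term (t = 0,1,2,...) is the index of the party receiving seat t+1.\<close>
definition stat_seq :: "nat list \<Rightarrow> real \<Rightarrow> nat \<Rightarrow> nat" where
  "stat_seq q c t = winner q c (seats q c t)"

definition pair_word :: "nat list \<Rightarrow> real \<Rightarrow> nat \<Rightarrow> nat \<Rightarrow> nat list" where
  "pair_word p c i j =
     map (\<lambda>x. if x = 0 then i else j)
       (map (stat_seq [p ! i, p ! j] c) [0 ..< (p ! i + p ! j) div Gcd (set p)])"

definition lift_ok :: "nat \<Rightarrow> (nat \<Rightarrow> nat \<Rightarrow> nat list) \<Rightarrow> nat \<Rightarrow> bool" where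
  "lift_ok n W k = (k < n \<and> (\<forall>j < n. j \<noteq> k \<longrightarrow>
      W (min k j) (max k j) \<noteq> [] \<and> hd (W (min k j) (max k j)) = k))"

definition lift_label :: "nat \<Rightarrow> (nat \<Rightarrow> nat \<Rightarrow> nat list) \<Rightarrow> nat" where
  "lift_label n W = (THE k. lift_ok n W k)"

definition lift_step :: "nat \<Rightarrow> nat \<Rightarrow> (nat \<Rightarrow> nat \<Rightarrow> nat list) \<Rightarrow> (nat \<Rightarrow> nat \<Rightarrow> nat list)" where
  "lift_step n k W = (\<lambda>i j. if i < j \<and> j < n \<and> (i = k \<or> j = k) then tl (W i j) else W i j)"

primrec lift_state :: "nat list \<Rightarrow> real \<Rightarrow> nat \<Rightarrow> (nat \<Rightarrow> nat \<Rightarrow> nat list)" where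
  "lift_state p c 0 = pair_word p c"
| "lift_state p c (Suc s) =
     (let W = lift_state p c s in lift_step (length p) (lift_label (length p) W) W)"

text \<open>Output letter w_{s+1} of the lifting procedure.\<close>
definition lift_out :: "nat list \<Rightarrow> real \<Rightarrow> nat \<Rightarrow> nat" where
  "lift_out p c s = lift_label (length p) (lift_state p c s)"

end

theory Submission
  imports Defs
begin

definition tm :: "nat list \<Rightarrow> real \<Rightarrow> nat \<Rightarrow> nat \<Rightarrow> real" where
  "tm q c i b = (real b + c) / real (q ! i)"

definition evl :: "nat list \<Rightarrow> real \<Rightarrow> nat \<Rightarrow> nat \<Rightarrow> nat \<Rightarrow> nat \<Rightarrow> bool" where
  "evl q c i b j b' = (tm q c i b < tm q c j b' \<or> (tm q c i b = tm q c j b' \<and> i < j))"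

lemma evl_trans: "evl q c i b j b' \<Longrightarrow> evl q c j b' k b'' \<Longrightarrow> evl q c i b k b''"
  unfolding evl_def by auto

lemma evl_asym: "evl q c i b j b' \<Longrightarrow> \<not> evl q c j b' i b"
  unfolding evl_def by auto

lemma evl_same: "q ! i > 0 \<Longrightarrow> b < b' \<Longrightarrow> evl q c i b i b'"
  unfolding evl_def tm_def by (auto intro!: divide_strict_right_mono)

definition dc :: "nat list \<Rightarrow> real \<Rightarrow> (nat \<Rightarrow> nat) \<Rightarrow> bool" where
  "dc q c a = (\<forall>i<length q. \<forall>j<length q. \<forall>b b'. b < a i \<and> a j \<le> b' \<longrightarrow> evl q c i b j b')"

lemma dc_unique:
  assumes "dc q c a" "dc q c a'" "(\<Sum>i<length q. a i) = (\<Sum>i<length q. a' i)"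
  shows "\<forall>i<length q. a i = a' i"
proof (rule ccontr)
  assume "\<not> (\<forall>i<length q. a i = a' i)"
  then obtain i0 where i0: "i0 < length q" "a i0 \<noteq> a' i0" by auto
  have ex: "\<exists>i<length q. f i < g i"
    if "(\<Sum>i<length q. f i) = (\<Sum>i<length q. g i)" "i0 < length q" "f i0 \<noteq> g i0"
    for f g :: "nat \<Rightarrow> nat"
  proof (rule ccontr)
    assume "\<not> (\<exists>i<length q. f i < g i)"
    hence le: "\<forall>i\<in>{..<length q}. g i \<le> f i" by auto
    have "\<exists>i\<in>{..<length q}. g i < f i" using that le by force
    hence "(\<Sum>i<length q. g i) < (\<Sum>i<length q. f i)"
      using le by (intro sum_strict_mono_ex1) auto
    thus False using that by simp
  qed
  obtain i where i: "i < length q" "a i < a' i" using ex[of a a'] assms(3) i0 by auto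
  obtain j where j: "j < length q" "a' j < a j" using ex[of a' a] assms(3) i0 by auto
  have "evl q c j (a' j) i (a i)" using assms(1) i j unfolding dc_def by auto
  moreover have "evl q c i (a i) j (a' j)" using assms(2) i j unfolding dc_def by auto
  ultimately show False using evl_asym by blast
qed

context
  fixes q :: "nat list" and c :: real
  assumes qpos: "\<forall>x\<in>set q. 0 < x" and qsorted: "sorted_wrt (\<ge>) q"
    and c0: "0 \<le> c" and qne: "q \<noteq> []"
begin

lemma qpos': "i < length q \<Longrightarrow> q ! i > 0"
  using qpos nth_mem by blast

lemma prio_ge_of_evl:
  assumes "k < length q" "j < length q" "j = k \<or> evl q c k (a k) j (a j)"
  shows "prio_ge q c a k j"
proof -
  have qk: "real (q ! k) > 0" and qj: "real (q ! j) > 0" using qpos' assms by auto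
  define x where "x = real (a k) + c"
  define y where "y = real (a j) + c"
  have x0: "x \<ge> 0" and y0: "y \<ge> 0" using c0 by (auto simp: x_def y_def)
  show ?thesis
  proof (cases "j = k")
    case True thus ?thesis unfolding prio_ge_def Let_def by auto
  next
    case False
    hence e: "x / q!k < y / q!j \<or> (x / q!k = y / q!j \<and> k < j)"
      using assms(3) unfolding evl_def tm_def x_def y_def by auto
    have s: "k < j \<Longrightarrow> q ! j \<le> q ! k" using qsorted assms
      by (simp add: sorted_wrt_iff_nth_less)
    show ?thesis
    proof (cases "x = 0")
      case True
      then show ?thesis using e s qj y0 unfolding prio_ge_def Let_def x_def[symmetric] y_def[symmetric]
        by (auto simp: divide_simps)
    next
      case xn: False
      hence xp: "x > 0" using x0 by auto
      show ?thesis
      proof (cases "y = 0")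
        case True
        then show ?thesis using e xp qk by (auto simp: divide_simps)
      next
        case False
        hence yp: "y > 0" using y0 by auto
        have "x / q!k \<le> y / q!j" using e by auto
        hence "x * q!j \<le> y * q!k" using qk qj by (simp add: divide_simps)
        hence "q!j / y \<le> q!k / x" using xp yp by (simp add: divide_simps mult.commute)
        then show ?thesis using xn False unfolding prio_ge_def Let_def x_def[symmetric] y_def[symmetric]
          by auto
      qed
    qed
  qed
qed

lemma not_prio:
  assumes "k < length q" "i < length q" "tm q c k (a k) < tm q c i (a i)"
  shows "\<not> prio_ge q c a i k"
proof -
  have qk: "real (q ! k) > 0" and qi: "real (q ! i) > 0" using qpos' assms by auto
  define x where "x = real (a i) + c"
  define y where "y = real (a k) + c"
  have x0: "x \<ge> 0" and y0: "y \<ge> 0" using c0 by (auto simp: x_def y_def)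
  have e: "y / q!k < x / q!i" using assms(3) unfolding tm_def x_def y_def by auto
  have yq: "y / q!k \<ge> 0" using y0 qk by auto
  have xp: "x > 0" using e yq qi x0 by (cases "x = 0") auto
  show ?thesis
  proof (cases "y = 0")
    case True thus ?thesis using xp unfolding prio_ge_def Let_def x_def[symmetric] y_def[symmetric] by auto
  next
    case False
    hence yp: "y > 0" using y0 by auto
    have "y * q!i < x * q!k" using e qk qi by (simp add: divide_simps)
    hence "q!i / x < q!k / y" using xp yp by (simp add: divide_simps mult.commute)
    thus ?thesis using xp False unfolding prio_ge_def Let_def x_def[symmetric] y_def[symmetric] by auto
  qed
qed

lemma winner_eq:
  assumes k: "k < length q" and kmin: "\<forall>j<length q. j \<noteq> k \<longrightarrow> evl q c k (a k) j (a j)"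
  shows "winner q c a = k"
  unfolding winner_def
proof (rule Least_equality)
  show "k < length q \<and> (\<forall>j<length q. prio_ge q c a k j)"
    using k kmin prio_ge_of_evl by blast
next
  fix i assume i: "i < length q \<and> (\<forall>j<length q. prio_ge q c a i j)"
  show "k \<le> i"
  proof (cases "i = k")
    case False
    hence "evl q c k (a k) i (a i)" using kmin i by auto
    moreover have "\<not> tm q c k (a k) < tm q c i (a i)" using not_prio[of k i a] i k by auto
    ultimately show ?thesis unfolding evl_def by auto
  qed simp
qed

lemma winner_ex: "\<exists>k<length q. \<forall>j<length q. j \<noteq> k \<longrightarrow> evl q c k (a k) j (a j)"
proof -
  define S where "S = (\<lambda>j. tm q c j (a j)) ` {..<length q}"
  have fS: "finite S" "S \<noteq> {}" using qne by (auto simp: S_def)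
  define T where "T = Min S"
  have "\<exists>j. j < length q \<and> tm q c j (a j) = T"
    using Min_in[OF fS] unfolding T_def S_def by auto
  define k where "k = (LEAST j. j < length q \<and> tm q c j (a j) = T)"
  have k: "k < length q \<and> tm q c k (a k) = T"
    unfolding k_def by (rule LeastI_ex) fact
  have "evl q c k (a k) j (a j)" if "j < length q" "j \<noteq> k" for j
  proof -
    have "T \<le> tm q c j (a j)" unfolding T_def S_def using fS that by (auto intro!: Min_le)
    moreover have "tm q c j (a j) = T \<Longrightarrow> k \<le> j" unfolding k_def using that by (auto intro: Least_le)
    ultimately show ?thesis using k that unfolding evl_def by force
  qed
  thus ?thesis using k by auto
qed

lemma winner_prop:
  "winner q c a < length q \<and> (\<forall>j<length q. j \<noteq> winner q c a \<longrightarrow> evl q c (winner q c a) (a (winner q c a)) j (a j))"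
  using winner_ex[of a] winner_eq by metis

lemma seats_Suc: "seats q c (Suc t) = (seats q c t)(winner q c (seats q c t) := seats q c t (winner q c (seats q c t)) + 1)"
  by (simp add: Let_def)

lemma dc_step:
  assumes "dc q c a"
  shows "dc q c (a(winner q c a := a (winner q c a) + 1))"
  unfolding dc_def
proof (intro allI impI)
  fix i j b b'
  assume ij: "i < length q" "j < length q" and bb: "b < (a(winner q c a := a (winner q c a) + 1)) i \<and>
      (a(winner q c a := a (winner q c a) + 1)) j \<le> b'"
  define k where "k = winner q c a"
  have wp: "k < length q" "\<forall>j<length q. j \<noteq> k \<longrightarrow> evl q c k (a k) j (a j)"
    using winner_prop[of a] unfolding k_def by auto
  have bj: "a j \<le> b'" using bb by (auto split: if_splits)
  show "evl q c i b j b'"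
  proof (cases "b < a i")
    case True thus ?thesis using assms ij bj unfolding dc_def by auto
  next
    case False
    hence ik: "i = k" "b = a k" using bb unfolding k_def by (auto split: if_splits)
    show ?thesis
    proof (cases "j = k")
      case True
      hence "b < b'" using bb ik unfolding k_def by auto
      thus ?thesis using evl_same qpos' ij ik True by auto
    next
      case False
      hence e1: "evl q c k (a k) j (a j)" using wp ij by auto
      show ?thesis
      proof (cases "a j = b'")
        case True thus ?thesis using e1 ik by simp
      next
        case False
        hence "evl q c j (a j) j b'" using evl_same qpos' ij bj by auto
        thus ?thesis using e1 ik evl_trans by blast
      qed
    qed
  qed
qed

lemma dc_seats: "dc q c (seats q c t)"
proof (induction t)
  case 0 show ?case unfolding dc_def by simp
next
  case (Suc t) thus ?case using dc_step seats_Suc by metis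
qed

lemma sum_seats: "(\<Sum>i<length q. seats q c t i) = t"
proof (induction t)
  case 0 show ?case by simp
next
  case (Suc t)
  define a where "a = seats q c t"
  define k where "k = winner q c a"
  have k: "k < length q" using winner_prop[of a] k_def by auto
  have "(\<Sum>i<length q. (a(k := a k + 1)) i) = (\<Sum>i<length q. a i + (if i = k then 1 else 0))"
    by (rule sum.cong) auto
  also have "\<dots> = (\<Sum>i<length q. a i) + 1"
    using k by (simp add: sum.distrib)
  finally show ?case using Suc a_def k_def by (simp add: Let_def)
qed

lemma seats_mono: "t \<le> t' \<Longrightarrow> seats q c t i \<le> seats q c t' i"
proof (induction t' rule: dec_induct)
  case (step n) thus ?case by (auto simp: Let_def)
qed simp

end

lemma lift_ok_unique: "lift_ok n W k \<Longrightarrow> lift_ok n W k' \<Longrightarrow> k = k'"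
  unfolding lift_ok_def by (metis min.commute max.commute)

lemma frac_aux:
  fixes x y G a b :: real
  assumes "x > 0" "y > 0" "G > 0" "a * y < b * x"
  shows "a / (x * G) < b / (y * G)"
proof -
  have "a * y * G < b * x * G" using assms by simp
  thus ?thesis using assms by (simp add: divide_simps algebra_simps)
qed

context
  fixes p :: "nat list" and c :: real
  assumes pos: "\<forall>x\<in>set p. 0 < x" and psorted: "sorted_wrt (\<ge>) p"
    and c0: "0 \<le> c" and c1: "c \<le> 1" and pne: "p \<noteq> []"
begin

abbreviation "g \<equiv> Gcd (set p)"
definition "m i = p ! i div g"
abbreviation "A \<equiv> seats p c"
abbreviation "n \<equiv> length p"

lemma ppos: "i < n \<Longrightarrow> p ! i > 0"
  using pos nth_mem by blast

lemma gpos: "g > 0"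
proof -
  have "p ! 0 \<in> set p" using pne by simp
  hence d: "g dvd p ! 0" by (rule Gcd_dvd)
  show ?thesis
  proof (rule ccontr)
    assume "\<not> g > 0"
    hence "g = 0" by simp
    hence "p ! 0 = 0" using d by (metis dvd_0_left_iff)
    thus False using ppos[of 0] pne by simp
  qed
qed

lemma pm: "i < n \<Longrightarrow> p ! i = m i * g"
  unfolding m_def using Gcd_dvd[of "p ! i" "set p"] nth_mem by simp

lemma mpos: "i < n \<Longrightarrow> m i > 0"
  using pm ppos by (metis mult_eq_0_iff neq0_conv)

lemma dc_m: "dc p c m"
  unfolding dc_def
proof (intro allI impI)
  fix i j b b' assume ij: "i < n" "j < n" and bb: "b < m i \<and> m j \<le> b'"
  have mi: "real (m i) > 0" "real (m j) > 0" using mpos ij by auto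
  have gp: "real g > 0" using gpos by simp
  have b1: "real b \<le> real (m i) - 1" using bb by linarith
  have b2: "real (m j) \<le> real b'" using bb by simp
  have "(real b + c) * m j \<le> (real (m i) - 1 + c) * m j"
    using b1 mi by (intro mult_right_mono) auto
  also have "\<dots> < (real (m j) + c) * m i"
  proof (cases "c < 1")
    case True
    have "(c - 1) * m j < 0" using True mi by (simp add: mult_neg_pos)
    moreover have "c * m i \<ge> 0" using c0 mi by simp
    ultimately show ?thesis by (simp add: algebra_simps)
  next
    case False
    hence "c = 1" using c1 by simp
    thus ?thesis using mi by (simp add: algebra_simps)
  qed
  also have "\<dots> \<le> (real b' + c) * m i"
    using b2 mi by (intro mult_right_mono) auto
  finally have lt: "(real b + c) * m j < (real b' + c) * m i" .
  have "(real b + c) / (real (m i) * g) < (real b' + c) / (real (m j) * g)"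
    using frac_aux[OF mi gp lt] .
  thus "evl p c i b j b'" unfolding evl_def tm_def using pm ij by simp
qed

lemma sum_m: "(\<Sum>i<n. m i) = sum_list p div g"
proof -
  have "sum_list p = (\<Sum>i<n. p ! i)" by (simp add: sum_list_sum_nth atLeast0LessThan)
  also have "\<dots> = (\<Sum>i<n. m i) * g" by (simp add: pm sum_distrib_right)
  finally show ?thesis using gpos by simp
qed

lemma A_P: "i < n \<Longrightarrow> A (sum_list p div g) i = m i"
  using dc_unique[OF dc_seats[OF pos psorted c0 pne] dc_m] sum_seats[OF pos psorted c0 pne] sum_m
  by metis

lemma A_le: "s \<le> sum_list p div g \<Longrightarrow> i < n \<Longrightarrow> A s i \<le> m i"
  using seats_mono[OF pos psorted c0 pne] A_P by metis

lemma win: "winner p c (A s) < n \<and> (\<forall>j<n. j \<noteq> winner p c (A s) \<longrightarrow>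
    evl p c (winner p c (A s)) (A s (winner p c (A s))) j (A s j))"
  using winner_prop[OF pos psorted c0 pne] by blast

lemma A_win_lt: assumes "s < sum_list p div g"
  shows "A s (winner p c (A s)) < m (winner p c (A s))"
proof (rule ccontr)
  define k where "k = winner p c (A s)"
  assume "\<not> A s (winner p c (A s)) < m (winner p c (A s))"
  hence km: "m k \<le> A s k" unfolding k_def by simp
  have "\<exists>i<n. A s i < m i"
  proof (rule ccontr)
    assume "\<not> (\<exists>i<n. A s i < m i)"
    hence "\<forall>i<n. m i \<le> A s i" by auto
    hence "(\<Sum>i<n. m i) \<le> (\<Sum>i<n. A s i)" by (intro sum_mono) auto
    thus False using sum_m sum_seats[OF pos psorted c0 pne] assms by simp
  qed
  then obtain i where i: "i < n" "A s i < m i" by auto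
  have ik: "i \<noteq> k" using i km by auto
  have kn: "k < n" using win k_def by auto
  have "evl p c i (A s i) k (A s k)" using dc_m i kn km unfolding dc_def by auto
  moreover have "evl p c k (A s k) i (A s i)" using win k_def ik i by auto
  ultimately show False using evl_asym by blast
qed

lemma pw_len: "i < n \<Longrightarrow> j < n \<Longrightarrow> length (pair_word p c i j) = m i + m j"
proof -
  assume ij: "i < n" "j < n"
  have "p ! i + p ! j = (m i + m j) * g" using pm ij by (simp add: algebra_simps)
  thus ?thesis unfolding pair_word_def using gpos by simp
qed

lemma pw_nth: "i < n \<Longrightarrow> j < n \<Longrightarrow> t < m i + m j \<Longrightarrow>
   pair_word p c i j ! t = (if stat_seq [p ! i, p ! j] c t = 0 then i else j)"
proof -
  assume ij: "i < n" "j < n" "t < m i + m j"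
  have "p ! i + p ! j = (m i + m j) * g" using pm ij by (simp add: algebra_simps)
  thus ?thesis unfolding pair_word_def using gpos ij by simp
qed

lemma pair_stat:
  assumes ij: "i < j" "j < n"
  shows "(evl p c i (A s i) j (A s j) \<longrightarrow> stat_seq [p ! i, p ! j] c (A s i + A s j) = 0)
       \<and> (evl p c j (A s j) i (A s i) \<longrightarrow> stat_seq [p ! i, p ! j] c (A s i + A s j) = 1)"
proof -
  define q where "q = [p ! i, p ! j]"
  have in_: "i < n" using ij by simp
  have qpos: "\<forall>x\<in>set q. 0 < x" using ppos ij in_ by (auto simp: q_def)
  have "p ! j \<le> p ! i" using psorted ij by (simp add: sorted_wrt_iff_nth_less)
  hence qs: "sorted_wrt (\<ge>) q" by (simp add: q_def)
  have qne: "q \<noteq> []" by (simp add: q_def)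
  note qctx = qpos qs c0 qne
  have L: "\<And>x::nat. x < 2 \<Longrightarrow> x = 0 \<or> x = 1" by auto
  have evq: "evl q c x b y b' = evl p c ([i,j] ! x) b ([i,j] ! y) b'" if "x < 2" "y < 2" for x y b b'
    using L[OF that(1)] L[OF that(2)] ij unfolding evl_def tm_def q_def by auto
  define a2 where "a2 = (\<lambda>x::nat. if x = 0 then A s i else A s j)"
  have dca2: "dc q c a2"
    unfolding dc_def
  proof (intro allI impI)
    fix x y b b' assume xy: "x < length q" "y < length q" and bb: "b < a2 x \<and> a2 y \<le> b'"
    have xy2: "x < 2" "y < 2" using xy by (auto simp: q_def)
    have "[i,j] ! x < n" "[i,j] ! y < n" using L[OF xy2(1)] L[OF xy2(2)] ij by auto
    moreover have "b < A s ([i,j] ! x)" "A s ([i,j] ! y) \<le> b'"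
      using L[OF xy2(1)] L[OF xy2(2)] bb by (auto simp: a2_def)
    ultimately have "evl p c ([i,j] ! x) b ([i,j] ! y) b'"
      using dc_seats[OF pos psorted c0 pne, of s] unfolding dc_def by blast
    thus "evl q c x b y b'" using evq xy2 by simp
  qed
  have "(\<Sum>x<length q. a2 x) = A s i + A s j" by (simp add: q_def a2_def numeral_2_eq_2)
  hence eq: "\<forall>x<length q. seats q c (A s i + A s j) x = a2 x"
    using dc_unique[OF dc_seats[OF qctx] dca2] sum_seats[OF qctx] by metis
  define a where "a = seats q c (A s i + A s j)"
  have a0: "a 0 = A s i" and a1: "a 1 = A s j" using eq by (auto simp: a_def a2_def q_def)
  show ?thesis
  proof (intro conjI impI)
    assume e: "evl p c i (A s i) j (A s j)"
    have "winner q c a = 0"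
    proof (rule winner_eq[OF qctx])
      show "0 < length q" by (simp add: q_def)
      show "\<forall>y<length q. y \<noteq> 0 \<longrightarrow> evl q c 0 (a 0) y (a y)"
      proof (intro allI impI)
        fix y assume "y < length q" "y \<noteq> 0"
        hence "y = 1" by (auto simp: q_def)
        thus "evl q c 0 (a 0) y (a y)" using evq[of 0 1] e a0 a1 by simp
      qed
    qed
    thus "stat_seq [p ! i, p ! j] c (A s i + A s j) = 0" by (simp add: stat_seq_def a_def q_def)
  next
    assume e: "evl p c j (A s j) i (A s i)"
    have "winner q c a = 1"
    proof (rule winner_eq[OF qctx])
      show "1 < length q" by (simp add: q_def)
      show "\<forall>y<length q. y \<noteq> 1 \<longrightarrow> evl q c 1 (a 1) y (a y)"
      proof (intro allI impI)
        fix y assume "y < length q" "y \<noteq> 1"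
        hence "y = 0" by (auto simp: q_def)
        thus "evl q c 1 (a 1) y (a y)" using evq[of 1 0] e a0 a1 by simp
      qed
    qed
    thus "stat_seq [p ! i, p ! j] c (A s i + A s j) = 1" by (simp add: stat_seq_def a_def q_def)
  qed
qed


abbreviation "PP \<equiv> sum_list p div g"

definition "liv s = (\<forall>i j. i < j \<and> j < n \<longrightarrow>
   lift_state p c s i j = drop (A s i + A s j) (pair_word p c i j))"

lemma ok_pair:
  assumes s: "s < PP" and ij: "i < j" "j < n" and liv: "liv s"
    and k: "k = winner p c (A s)" "k = i \<or> k = j"
  shows "lift_state p c s i j \<noteq> [] \<and> hd (lift_state p c s i j) = k"
proof -
  have kev: "\<forall>j<n. j \<noteq> k \<longrightarrow> evl p c k (A s k) j (A s j)" using win k by auto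
  have km: "A s k < m k" using A_win_lt s k by auto
  have le: "A s i \<le> m i" "A s j \<le> m j" using A_le s ij by auto
  have lt: "A s i + A s j < m i + m j" using km le k(2) by auto
  have W: "lift_state p c s i j = drop (A s i + A s j) (pair_word p c i j)" using liv ij unfolding liv_def by auto
  have len: "length (pair_word p c i j) = m i + m j" using pw_len ij by auto
  have hd: "hd (lift_state p c s i j) = (if stat_seq [p ! i, p ! j] c (A s i + A s j) = 0 then i else j)"
    using W len lt pw_nth[of i j] ij by (simp add: hd_drop_conv_nth)
  have ne: "lift_state p c s i j \<noteq> []" using W len lt by simp
  show ?thesis
  proof (cases "k = i")
    case True
    hence "evl p c i (A s i) j (A s j)" using kev ij by auto
    thus ?thesis using pair_stat[OF ij] hd ne True by simp
  next
    case False
    hence kj: "k = j" using k by auto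
    hence "evl p c j (A s j) i (A s i)" using kev ij by auto
    thus ?thesis using pair_stat[OF ij] hd ne kj ij by simp
  qed
qed

lemma ok_step:
  assumes s: "s < PP" and liv: "liv s"
  shows "lift_ok n (lift_state p c s) (stat_seq p c s)"
proof -
  define k where "k = winner p c (A s)"
  have kn: "k < n" using win k_def by auto
  have "\<forall>j<n. j \<noteq> k \<longrightarrow> lift_state p c s (min k j) (max k j) \<noteq> [] \<and> hd (lift_state p c s (min k j) (max k j)) = k"
  proof (intro allI impI)
    fix j assume j: "j < n" "j \<noteq> k"
    show "lift_state p c s (min k j) (max k j) \<noteq> [] \<and> hd (lift_state p c s (min k j) (max k j)) = k"
    proof (cases "k < j")
      case True thus ?thesis using ok_pair[OF s _ _ liv k_def] j by auto
    next
      case False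
      hence "j < k" using j by auto
      thus ?thesis using ok_pair[OF s _ _ liv k_def] kn by auto
    qed
  qed
  thus ?thesis unfolding lift_ok_def stat_seq_def k_def[symmetric] using kn by blast
qed

lemma label_eq: "s < PP \<Longrightarrow> liv s \<Longrightarrow> lift_label n (lift_state p c s) = stat_seq p c s"
  unfolding lift_label_def using ok_step lift_ok_unique by (metis the_equality)

lemma liv_all: "s \<le> PP \<Longrightarrow> liv s"
proof (induction s)
  case 0
  show ?case unfolding liv_def by simp
next
  case (Suc s)
  hence s: "s < PP" and iv: "liv s" by auto
  define k where "k = winner p c (A s)"
  have AS: "A (Suc s) = (A s)(k := A s k + 1)" using k_def by (simp add: Let_def)
  have LS: "lift_state p c (Suc s) = lift_step n k (lift_state p c s)"
    using label_eq[OF s iv] by (simp add: Let_def stat_seq_def k_def)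
  show ?case unfolding liv_def
  proof (intro allI impI)
    fix i j assume ij: "i < j \<and> j < n"
    show "lift_state p c (Suc s) i j = drop (A (Suc s) i + A (Suc s) j) (pair_word p c i j)"
    proof (cases "i = k \<or> j = k")
      case True
      have "A (Suc s) i + A (Suc s) j = Suc (A s i + A s j)" using True ij AS by auto
      thus ?thesis using LS True ij iv unfolding liv_def lift_step_def by (simp add: drop_Suc tl_drop)
    next
      case False
      thus ?thesis using LS ij iv AS unfolding liv_def lift_step_def by simp
    qed
  qed
qed

lemma main_ne:
  "(\<forall>s < PP. \<exists>!k. lift_ok n (lift_state p c s) k)
    \<and> (\<forall>i j. i < j \<and> j < n \<longrightarrow> lift_state p c PP i j = [])
    \<and> map (lift_out p c) [0 ..< PP] = map (stat_seq p c) [0 ..< PP]"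
proof (intro conjI allI impI)
  fix s assume s: "s < PP"
  show "\<exists>!k. lift_ok n (lift_state p c s) k"
    using ok_step[OF s liv_all] s lift_ok_unique by auto
next
  fix i j assume ij: "i < j \<and> j < n"
  have "lift_state p c PP i j = drop (A PP i + A PP j) (pair_word p c i j)"
    using liv_all[of PP] ij unfolding liv_def by auto
  thus "lift_state p c PP i j = []" using A_P pw_len ij by simp
next
  show "map (lift_out p c) [0 ..< PP] = map (stat_seq p c) [0 ..< PP]"
    using label_eq liv_all unfolding lift_out_def by simp
qed

end

theorem mainTheorem16:
  fixes p :: "nat list" and c :: real
  assumes pos: "\<forall>x \<in> set p. x > 0"
    and sorted: "sorted_wrt (\<ge>) p"
    and c0: "0 \<le> c" and c1: "c \<le> 1"
  defines "P \<equiv> sum_list p div Gcd (set p)"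
  shows "(\<forall>s < P. \<exists>!k. lift_ok (length p) (lift_state p c s) k)
    \<and> (\<forall>i j. i < j \<and> j < length p \<longrightarrow> lift_state p c P i j = [])
    \<and> map (lift_out p c) [0 ..< P] = map (stat_seq p c) [0 ..< P]"
proof (cases "p = []")
  case True
  thus ?thesis unfolding P_def by simp
next
  case False
  show ?thesis using main_ne[OF pos sorted c0 c1 False] unfolding P_def .
qed

end
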